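(* Let $c>0$ and $0<p<1$, and let $(p_n)$ be the symmetric orthonormal polynomials with recursion coefficients $\gamma_n=c(n+1)^p$. Then for every $\omega\in\mathbb{R}$, \[ 0<\lim_{n\to\infty}\frac{\sum_{k=0}^n p_k^2(\omega)}{(n+1)^{1-p}}<\infty, \] and the convergence of the limit is uniform on every compact subset of $\mathbb{R}$.
   Context: Given positive reals $\gamma_n>0$ ($n\ge0$), set $\gamma_{-1}=1$, $p_{-1}(\omega)=0$, $p_0(\omega)=1$, and define polynomials by $\gamma_n p_{n+1}(\omega)=\omega p_n(\omega)-\gamma_{n-1}p_{n-1}(\omega)$ for $n\ge 0$. *)

theory Defs
  imports "HOL-Analysis.Analysis"
begin

text \<open>Pairs (p_n, p_(n+1)) for the three-term recursion
  gamma_n p_(n+1) = w p_n - gamma_(n-1) p_(n-1), with p_(-1) = 0, p_0 = 1, gamma_(-1) = 1.\<close>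
fun opoly_pair :: "(nat \<Rightarrow> real) \<Rightarrow> real \<Rightarrow> nat \<Rightarrow> real \<times> real" where
  "opoly_pair g w 0 = (1, w / g 0)"
| "opoly_pair g w (Suc n) =
     (let (a, b) = opoly_pair g w n in (b, (w * b - g n * a) / g (Suc n)))"

definition opoly :: "(nat \<Rightarrow> real) \<Rightarrow> nat \<Rightarrow> real \<Rightarrow> real" where
  "opoly g n w = fst (opoly_pair g w n)"

lemma opoly_0: "opoly g 0 w = 1"
  by (simp add: opoly_def)

lemma opoly_1: "opoly g 1 w = w / g 0"
  by (simp add: opoly_def split_def)

lemma opoly_rec: "g (Suc n) * opoly g (Suc (Suc n)) w = w * opoly g (Suc n) w - g n * opoly g n w"
  if "g (Suc n) > 0"
  using that by (simp add: opoly_def Let_def split_def)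

end

theory Submission
  imports Defs "HOL-Analysis.Analysis"
begin


lemma powr_diff_le:
  fixes a b p :: real
  assumes "0 < a" "a \<le> b" "0 \<le> p" "p \<le> 1"
  shows "b powr p - a powr p \<le> (b - a) / a * a powr p"
proof -
  have "(b/a) powr p \<le> (b/a) powr 1"
    using assms by (intro powr_mono) auto
  hence h: "(b/a) powr p \<le> b/a" using assms by simp
  have "b powr p = (b/a) powr p * a powr p"
    using assms by (simp add: powr_mult[symmetric])
  hence "b powr p - a powr p = a powr p * ((b/a) powr p - 1)" by (simp add: algebra_simps)
  also have "\<dots> \<le> a powr p * (b/a - 1)"
    using h by (intro mult_left_mono) auto
  also have "\<dots> = (b - a) / a * a powr p" using assms by (simp add: field_simps)
  finally show ?thesis .
qed

definition gg :: "real \<Rightarrow> real \<Rightarrow> nat \<Rightarrow> real" where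
  "gg c p n = c * (real n + 1) powr p"

context
  fixes c p :: real
  assumes c: "c > 0" and p0: "0 < p" and p1: "p < 1"
begin

lemma gg_pos: "gg c p n > 0"
  using c by (simp add: gg_def)

lemma gg_ratio: "gg c p m / gg c p n = ((real m + 1) / (real n + 1)) powr p"
  using c by (simp add: gg_def powr_divide)

lemma gg_mono: "gg c p n \<le> gg c p (Suc n)"
  using c p0 by (auto simp: gg_def intro!: powr_mono2)

lemma gg_e: "1 - gg c p n / gg c p (Suc n) \<le> 1 / (real n + 2)"
proof -
  have x: "0 \<le> (real n + 1)/(real n + 2)" "(real n + 1)/(real n + 2) \<le> 1" by auto
  have "((real n + 1)/(real n + 2)) powr 1 \<le> ((real n + 1)/(real n + 2)) powr p"
    using x p1 by (intro powr_mono') auto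
  hence "(real n + 1)/(real n + 2) \<le> gg c p n / gg c p (Suc n)"
    by (simp add: gg_ratio add.commute)
  moreover have "1 - (real n + 1)/(real n + 2) = 1 / (real n + 2)" by (simp add: field_simps)
  ultimately show ?thesis by linarith
qed

lemma gg_e0: "gg c p n / gg c p (Suc n) \<le> 1"
  using gg_mono[of n] gg_pos[of n] gg_pos[of "Suc n"] by simp

lemma gg_e2: "\<bar>gg c p (Suc n) / gg c p (Suc (Suc n)) - gg c p n / gg c p (Suc n)\<bar> \<le> 1 / (real n + 1)^2"
proof -
  define a where "a = (real n + 1)/(real n + 2)"
  define b where "b = (real n + 2)/(real n + 3)"
  have ab: "0 < a" "a \<le> b" "b \<le> 1" by (auto simp: a_def b_def field_simps)
  have 1: "gg c p (Suc n) / gg c p (Suc (Suc n)) = b powr p"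
    by (simp add: gg_ratio b_def add.commute)
  have 2: "gg c p n / gg c p (Suc n) = a powr p"
    by (simp add: gg_ratio a_def add.commute)
  have "a powr p \<le> b powr p" using ab p0 by (intro powr_mono2) auto
  moreover have "b powr p - a powr p \<le> (b - a) / a * a powr p"
    using ab p0 p1 by (intro powr_diff_le) auto
  moreover have "a powr p \<le> 1" using ab p0 by (intro powr_le1) auto
  moreover have "(b - a)/a = 1/((real n + 1)*(real n + 3))"
    unfolding a_def b_def by (simp add: divide_simps) (simp add: algebra_simps)
  moreover have "1/((real n + 1)*(real n + 3)) \<le> 1 / (real n + 1)^2"
    by (intro divide_left_mono) (auto simp: power2_eq_square intro!: mult_left_mono)
  moreover have "0 \<le> (b - a)/a" using ab by auto
  ultimately have "b powr p - a powr p \<le> 1 / (real n + 1)^2"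
    by (smt (verit) mult_left_le)
  with \<open>a powr p \<le> b powr p\<close> show ?thesis unfolding 1 2 by simp
qed

lemma gg_r2: "\<bar>gg c p (Suc (Suc n)) / gg c p (Suc n) - gg c p (Suc n) / gg c p n\<bar> \<le> 1 / (real n + 1)^2"
proof -
  define a where "a = (real n + 3)/(real n + 2)"
  define b where "b = (real n + 2)/(real n + 1)"
  have ab: "1 \<le> a" "a \<le> b" by (auto simp: a_def b_def field_simps)
  have 1: "gg c p (Suc (Suc n)) / gg c p (Suc n) = a powr p"
    by (simp add: gg_ratio a_def add.commute)
  have 2: "gg c p (Suc n) / gg c p n = b powr p"
    by (simp add: gg_ratio b_def add.commute)
  have "a powr p \<le> b powr p" using ab p0 by (intro powr_mono2) auto
  moreover have "b powr p - a powr p \<le> (b - a) / a * a powr p"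
    using ab p0 p1 by (intro powr_diff_le) auto
  moreover have "a powr p \<le> a powr 1" using ab p1 by (intro powr_mono) auto
  moreover have "b - a = 1/((real n + 1)*(real n + 2))"
    unfolding a_def b_def by (simp add: divide_simps) (simp add: algebra_simps)
  moreover have "1/((real n + 1)*(real n + 2)) \<le> 1 / (real n + 1)^2"
    by (intro divide_left_mono) (auto simp: power2_eq_square intro!: mult_left_mono)
  moreover have "(b - a) / a * a powr p \<le> b - a"
  proof -
    have "(b - a) / a * a powr p \<le> (b - a) / a * a"
      using ab \<open>a powr p \<le> a powr 1\<close> by (intro mult_left_mono) auto
    thus ?thesis using ab by simp
  qed
  ultimately show ?thesis unfolding 1 2 by linarith
qed

lemma gg_ge: "\<exists>N. \<forall>n\<ge>N. M \<le> gg c p n"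
proof -
  obtain N :: nat where N: "(max M 1 / c) powr (1/p) \<le> real N" using real_arch_simple by blast
  show ?thesis
  proof (intro exI allI impI)
    fix n assume "N \<le> n"
    hence "(max M 1 / c) powr (1/p) \<le> real n + 1" using N by linarith
    hence "((max M 1 / c) powr (1/p)) powr p \<le> (real n + 1) powr p"
      using p0 by (intro powr_mono2) auto
    also have "((max M 1 / c) powr (1/p)) powr p = max M 1 / c"
      using p0 c by (simp add: powr_powr)
    finally have "max M 1 \<le> c * (real n + 1) powr p" using c by (simp add: field_simps)
    thus "M \<le> gg c p n" by (simp add: gg_def)
  qed
qed

lemma gg_sum: "summable (\<lambda>n. 1 / ((real n + 1) * gg c p n))"
proof -
  have "summable (\<lambda>n. real n powr (-(1+p)))"
    using p0 by (subst summable_real_powr_iff) auto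
  hence "summable (\<lambda>n. real (Suc n) powr (-(1+p)))"
    by (subst summable_Suc_iff)
  hence S: "summable (\<lambda>n. (1/c) * real (Suc n) powr (-(1+p)))" by (rule summable_mult)
  have E: "(1/c) * real (Suc n) powr (-(1+p)) = 1 / ((real n + 1) * gg c p n)" for n
  proof -
    have "real (Suc n) powr (-(1+p)) = inverse (real (Suc n) powr (1+p))" by (rule powr_minus)
    also have "real (Suc n) powr (1+p) = real (Suc n) * real (Suc n) powr p"
      by (simp add: powr_add)
    finally show ?thesis using c by (simp add: gg_def field_simps)
  qed
  show ?thesis using S unfolding E .
qed

end


lemma estep_alg:
  fixes g0 g1 w a b d :: real
  assumes "g1 > 0" "g1 * d = w * b - g0 * a"
  shows "(g1*(b^2+d^2) - w*b*d) - (g0*(a^2+b^2) - w*a*b) = (1 - g0/g1) * ((g1+g0)*b^2 - (g0*(a^2+b^2) - w*a*b))"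
proof -
  have "g1 * ((g1*(b^2+d^2) - w*b*d) - (g0*(a^2+b^2) - w*a*b)) = (g1 - g0) * ((g1+g0)*b^2 - (g0*(a^2+b^2) - w*a*b))"
    using assms(2) by algebra
  moreover have "(1 - g0/g1) = (g1 - g0)/g1" using assms(1) by (simp add: field_simps)
  ultimately show ?thesis using assms(1) by (simp add: field_simps)
qed

lemma xsum_alg:
  fixes g0 g1 g2 w a b d :: real
  assumes "g0 > 0" "g1 * d = w * b - g0 * a"
  shows "((g1+g0)*b^2 - (g0*(a^2+b^2) - w*a*b)) + ((g2+g1)*d^2 - (g1*(b^2+d^2) - w*b*d))
     = d^2 * (g2 - g1^2/g0) + w*b*d*(g0+g1)/g0" (is "?L = ?R")
proof -
  have h: "g0 * ?L = d^2 * (g0*g2 - g1^2) + w*b*d*(g0+g1)"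
    using assms(2) by algebra
  have "?L = (g0 * ?L) / g0" using assms(1) by simp
  also have "\<dots> = (d^2 * (g0*g2 - g1^2) + w*b*d*(g0+g1)) / g0" by (simp only: h)
  also have "\<dots> = ?R" using assms(1) by (simp add: field_simps)
  finally show ?thesis .
qed

lemma abs_prod_le: "\<bar>a * b\<bar> \<le> (a^2 + b^2) / 2" for a b :: real
proof -
  have "0 \<le> (\<bar>a\<bar> - \<bar>b\<bar>)^2" by simp
  hence "2 * (\<bar>a\<bar> * \<bar>b\<bar>) \<le> a^2 + b^2" by (simp add: power2_eq_square algebra_simps)
  thus ?thesis by (simp add: abs_mult)
qed

locale jac =
  fixes g :: "nat \<Rightarrow> real"
  assumes gpos: "\<And>n. g n > 0"
    and gmono: "\<And>n. g n \<le> g (Suc n)"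
    and ge: "\<And>n. 1 - g n / g (Suc n) \<le> 1 / (real n + 2)"
    and ge2: "\<And>n. \<bar>g (Suc n) / g (Suc (Suc n)) - g n / g (Suc n)\<bar> \<le> 1 / (real n + 1)^2"
    and gr2: "\<And>n. \<bar>g (Suc (Suc n)) / g (Suc n) - g (Suc n) / g n\<bar> \<le> 1 / (real n + 1)^2"
begin

abbreviation P where "P n w \<equiv> opoly g n w"

lemma rec: "g (Suc n) * P (Suc (Suc n)) w = w * P (Suc n) w - g n * P n w"
  using gpos by (intro opoly_rec) auto

lemma nz: "\<not> (P n w = 0 \<and> P (Suc n) w = 0)"
proof (induction n)
  case 0 then show ?case by (simp add: opoly_0)
next
  case (Suc n)
  show ?case
  proof
    assume h: "P (Suc n) w = 0 \<and> P (Suc (Suc n)) w = 0"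
    with rec[of n w] gpos[of n] have "P n w = 0" by simp
    with Suc h show False by simp
  qed
qed

lemma nonzero: "P n w ^ 2 + P (Suc n) w ^ 2 > 0"
  using nz[of n w] by (simp add: sum_power2_gt_zero_iff)

definition E where "E n w = g n * (P n w ^ 2 + P (Suc n) w ^ 2) - w * P n w * P (Suc n) w"
definition X where "X n w = (g (Suc n) + g n) * P (Suc n) w ^ 2 - E n w"
definition e where "e n = 1 - g n / g (Suc n)"

lemma E_step: "E (Suc n) w - E n w = e n * X n w"
  unfolding E_def X_def e_def by (rule estep_alg[OF gpos rec])

lemma X_sum: "X n w + X (Suc n) w = P (Suc (Suc n)) w ^ 2 * (g (Suc (Suc n)) - g (Suc n)^2 / g n)
   + w * P (Suc n) w * P (Suc (Suc n)) w * (g n + g (Suc n)) / g n"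
  unfolding E_def X_def by (rule xsum_alg[OF gpos rec])

lemma e_nonneg: "0 \<le> e n"
  using gmono[of n] gpos[of n] gpos[of "Suc n"] by (simp add: e_def)

lemma e_le: "e n \<le> 1 / (real n + 1)"
proof -
  have "1 / (real n + 2) \<le> 1 / (real n + 1)" by (intro divide_left_mono) auto
  thus ?thesis using ge[of n] by (simp add: e_def)
qed

lemma g_double: "g (Suc n) \<le> 2 * g n"
proof -
  have "1 / (real n + 2) \<le> 1/2" by auto
  hence "1/2 \<le> g n / g (Suc n)" using ge[of n] by linarith
  thus ?thesis using gpos[of "Suc n"] by (simp add: field_simps)
qed

lemma E_close: "\<bar>g n * (P n w ^ 2 + P (Suc n) w ^ 2) - E n w\<bar> \<le> \<bar>w\<bar> * ((P n w ^ 2 + P (Suc n) w ^ 2) / 2)"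
proof -
  have "\<bar>g n * (P n w ^ 2 + P (Suc n) w ^ 2) - E n w\<bar> = \<bar>w\<bar> * \<bar>P n w * P (Suc n) w\<bar>"
    by (simp add: E_def abs_mult mult.assoc)
  also have "\<dots> \<le> \<bar>w\<bar> * ((P n w ^ 2 + P (Suc n) w ^ 2) / 2)"
    by (intro mult_left_mono abs_prod_le) auto
  finally show ?thesis .
qed

lemma E_lower: assumes "\<bar>w\<bar> \<le> g n"
  shows "g n / 2 * (P n w ^ 2 + P (Suc n) w ^ 2) \<le> E n w"
proof -
  have "\<bar>w\<bar> * ((P n w ^ 2 + P (Suc n) w ^ 2) / 2) \<le> g n * ((P n w ^ 2 + P (Suc n) w ^ 2) / 2)"
    using assms by (intro mult_right_mono) auto
  with E_close[of n w] have "g n * (P n w ^ 2 + P (Suc n) w ^ 2) - E n w \<le> g n * ((P n w ^ 2 + P (Suc n) w ^ 2) / 2)"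
    by (meson abs_le_D1 order_trans)
  moreover have "g n / 2 * (P n w ^ 2 + P (Suc n) w ^ 2) = g n * (P n w ^ 2 + P (Suc n) w ^ 2) - g n * ((P n w ^ 2 + P (Suc n) w ^ 2) / 2)"
    by (simp add: field_simps)
  ultimately show ?thesis by linarith
qed

lemma E_pos: assumes "\<bar>w\<bar> \<le> g n" shows "0 < E n w"
proof -
  have "0 < g n / 2 * (P n w ^ 2 + P (Suc n) w ^ 2)" using gpos[of n] nonzero[of n w] by simp
  with E_lower[OF assms] show ?thesis by linarith
qed

lemma sq_le_E: assumes "\<bar>w\<bar> \<le> g n"
  shows "P n w ^ 2 + P (Suc n) w ^ 2 \<le> 2 * E n w / g n"
  using E_lower[OF assms] gpos[of n] by (simp add: field_simps)

lemma X_bound: assumes "\<bar>w\<bar> \<le> g n" shows "\<bar>X n w\<bar> \<le> 7 * E n w"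
proof -
  have s: "P (Suc n) w ^ 2 \<le> 2 * E n w / g n" using sq_le_E[OF assms] by (smt (verit) zero_le_power2)
  have "(g (Suc n) + g n) * P (Suc n) w ^ 2 \<le> (3 * g n) * (2 * E n w / g n)"
    using g_double[of n] s gpos[of n] gpos[of "Suc n"] by (intro mult_mono) auto
  also have "\<dots> = 6 * E n w" using gpos[of n] by simp
  finally have "(g (Suc n) + g n) * P (Suc n) w ^ 2 \<le> 6 * E n w" .
  moreover have "0 \<le> (g (Suc n) + g n) * P (Suc n) w ^ 2" using gpos[of n] gpos[of "Suc n"] by simp
  moreover have "0 < E n w" by (rule E_pos[OF assms])
  ultimately show ?thesis by (simp add: X_def abs_le_iff)
qed

lemma step2:
  assumes w: "\<bar>w\<bar> \<le> R" and R: "R \<le> g n"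
  shows "\<bar>E (Suc (Suc n)) w - E n w\<bar> \<le> (9 / (real n + 1)^2 + 2 * R / ((real n + 1) * g n)) * E (Suc n) w"
proof -
  define g0 g1 g2 b d E1 N1 where defs: "g0 = g n" "g1 = g (Suc n)" "g2 = g (Suc (Suc n))"
    "b = P (Suc n) w" "d = P (Suc (Suc n)) w" "E1 = E (Suc n) w" "N1 = real n + 1"
  have gp: "g0 > 0" "g1 > 0" "g2 > 0" using gpos unfolding defs by auto
  have N1: "N1 \<ge> 1" unfolding defs by simp
  have R0: "0 \<le> R" using w by linarith
  have w1: "\<bar>w\<bar> \<le> g (Suc n)" using w R gmono[of n] by linarith
  have E1p: "0 < E1" unfolding defs by (rule E_pos[OF w1])
  have sq: "b^2 + d^2 \<le> 2 * E1 / g1" unfolding defs using sq_le_E[OF w1] by simp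
  have d2: "d^2 \<le> 2 * E1 / g1" using sq by (smt (verit) zero_le_power2)
  have bd: "\<bar>b * d\<bar> \<le> E1 / g1" using abs_prod_le[of b d] sq by simp
  have T1: "\<bar>d^2 * (g2 - g1^2/g0)\<bar> \<le> 2 * E1 / N1^2"
  proof -
    have eq: "g2 - g1^2/g0 = g1 * (g2/g1 - g1/g0)" using gp by (simp add: field_simps power2_eq_square)
    have "\<bar>g2/g1 - g1/g0\<bar> \<le> 1 / N1^2" using gr2[of n] unfolding defs .
    hence "\<bar>g1\<bar> * \<bar>g2/g1 - g1/g0\<bar> \<le> g1 * (1 / N1^2)" using gp
      by (metis abs_of_pos less_imp_le mult_left_mono)
    hence "\<bar>g2 - g1^2/g0\<bar> \<le> g1 * (1 / N1^2)" unfolding eq abs_mult .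
    hence "d^2 * \<bar>g2 - g1^2/g0\<bar> \<le> (2 * E1 / g1) * (g1 * (1 / N1^2))"
      using d2 gp E1p by (intro mult_mono) auto
    also have "\<dots> = 2 * E1 / N1^2" using gp by simp
    finally show ?thesis by (simp add: abs_mult)
  qed
  have T2: "\<bar>w * b * d * (g0 + g1) / g0\<bar> \<le> 2 * R * E1 / g0"
  proof -
    have "\<bar>w * b * d * (g0 + g1) / g0\<bar> = \<bar>w\<bar> * \<bar>b * d\<bar> * ((g0 + g1) / g0)"
      using gp by (simp add: abs_mult mult.assoc)
    also have "\<dots> \<le> R * (E1 / g1) * ((g0 + g1) / g0)"
      using w bd gp by (intro mult_mono mult_right_mono) auto
    also have "\<dots> = R * E1 * (1/g1 + 1/g0)" using gp by (simp add: field_simps)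
    also have "\<dots> \<le> R * E1 * (2/g0)"
    proof -
      have "1/g1 \<le> 1/g0" using gp gmono[of n] unfolding defs by (intro divide_left_mono) auto
      thus ?thesis using R0 E1p by (intro mult_left_mono) auto
    qed
    also have "\<dots> = 2 * R * E1 / g0" by simp
    finally show ?thesis .
  qed
  have XS: "\<bar>X n w + X (Suc n) w\<bar> \<le> 2 * E1 / N1^2 + 2 * R * E1 / g0"
  proof -
    have eq: "X n w + X (Suc n) w = d^2 * (g2 - g1^2/g0) + w * b * d * (g0 + g1) / g0"
      unfolding X_sum defs ..
    show ?thesis unfolding eq
      by (rule order_trans[OF abs_triangle_ineq]) (rule add_mono[OF T1 T2])
  qed
  have A: "\<bar>e n * (X n w + X (Suc n) w)\<bar> \<le> 2 * E1 / N1^2 + 2 * R * E1 / (N1 * g0)"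
  proof -
    have "\<bar>e n * (X n w + X (Suc n) w)\<bar> \<le> (1 / N1) * (2 * E1 / N1^2 + 2 * R * E1 / g0)"
      unfolding abs_mult using e_le[of n] e_nonneg[of n] XS unfolding defs
      by (intro mult_mono) auto
    also have "\<dots> = (1/N1) * (2 * E1 / N1^2) + 2 * R * E1 / (N1 * g0)"
      using gp N1 by (simp add: field_simps)
    also have "(1/N1) * (2 * E1 / N1^2) \<le> 1 * (2 * E1 / N1^2)"
      using N1 E1p by (intro mult_right_mono) auto
    finally show ?thesis by simp
  qed
  have B: "\<bar>(e (Suc n) - e n) * X (Suc n) w\<bar> \<le> 7 * E1 / N1^2"
  proof -
    have "\<bar>e (Suc n) - e n\<bar> \<le> 1 / N1^2"
      using ge2[of n] unfolding e_def defs by (simp add: abs_minus_commute)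
    moreover have "\<bar>X (Suc n) w\<bar> \<le> 7 * E1" unfolding defs by (rule X_bound[OF w1])
    ultimately have "\<bar>e (Suc n) - e n\<bar> * \<bar>X (Suc n) w\<bar> \<le> (1 / N1^2) * (7 * E1)"
      by (intro mult_mono) auto
    thus ?thesis by (simp add: abs_mult)
  qed
  have dec: "E (Suc (Suc n)) w - E n w = e n * (X n w + X (Suc n) w) + (e (Suc n) - e n) * X (Suc n) w"
    using E_step[of n w] E_step[of "Suc n" w] by (simp add: algebra_simps)
  have "\<bar>E (Suc (Suc n)) w - E n w\<bar> \<le> 9 * E1 / N1^2 + 2 * R * E1 / (N1 * g0)"
    unfolding dec using A B by linarith
  also have "\<dots> = (9 / N1^2 + 2 * R / (N1 * g0)) * E1" using gp N1 by (simp add: field_simps)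
  finally show ?thesis unfolding defs .
qed

end


lemma exp_m2_le: fixes t :: real assumes "0 \<le> t" "t \<le> 1/2" shows "exp (-2*t) \<le> 1 - t"
proof -
  have "1 + 2*t \<le> exp (2*t)" using exp_ge_add_one_self[of "2*t"] by simp
  hence "exp (-2*t) \<le> 1 / (1 + 2*t)" using assms
    by (simp add: exp_minus field_simps)
  also have "1 / (1 + 2*t) \<le> 1 - t" using assms
    by (simp add: field_simps) (metis mult_left_mono mult.right_neutral)
  finally show ?thesis .
qed

lemma sum_shift_aux: fixes j :: nat shows "sum f {n..<n+j} = (\<Sum>k<j. f (k + n))"
  by (induction j) (simp_all add: add.commute)

lemma mult_conv:
  fixes x eps :: "nat \<Rightarrow> real" and N :: nat
  assumes eps0: "\<And>n. 0 \<le> eps n" and eps_half: "\<And>n. n \<ge> N \<Longrightarrow> eps n \<le> 1/2"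
    and sm: "summable eps"
    and step: "\<And>n. n \<ge> N \<Longrightarrow> \<bar>x (Suc n) - x n\<bar> \<le> eps n * x n"
    and pos: "x N > 0"
  shows "\<exists>L. x \<longlonglongrightarrow> L \<and> x N * exp (-2 * suminf eps) \<le> L
     \<and> (\<forall>n\<ge>N. 0 < x n \<and> x n \<le> x N * exp (suminf eps)
        \<and> \<bar>L - x n\<bar> \<le> x N * exp (suminf eps) * (\<Sum>k. eps (k + n)))"
proof -
  define S where "S = suminf eps"
  define B where "B = x N * exp S"
  have ind: "0 < x (N + j) \<and> x (N + j) \<le> x N * exp (sum eps {N..<N+j})
      \<and> x N * exp (-2 * sum eps {N..<N+j}) \<le> x (N + j)" for j
  proof (induction j)
    case 0 then show ?case using pos by simp
  next
    case (Suc j)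
    let ?n = "N + j"
    have st: "\<bar>x (Suc ?n) - x ?n\<bar> \<le> eps ?n * x ?n" by (rule step) simp
    have e: "0 \<le> eps ?n" "eps ?n \<le> 1/2" using eps0 eps_half by auto
    have up: "x (Suc ?n) \<le> exp (eps ?n) * x ?n"
    proof -
      have "x (Suc ?n) \<le> (1 + eps ?n) * x ?n" using st by (simp add: algebra_simps abs_le_iff)
      also have "\<dots> \<le> exp (eps ?n) * x ?n"
        using Suc.IH exp_ge_add_one_self[of "eps ?n"] by (intro mult_right_mono) auto
      finally show ?thesis .
    qed
    have lo: "exp (-2 * eps ?n) * x ?n \<le> x (Suc ?n)"
    proof -
      have "exp (-2 * eps ?n) * x ?n \<le> (1 - eps ?n) * x ?n"
        using Suc.IH exp_m2_le[OF e] by (intro mult_right_mono) auto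
      also have "\<dots> \<le> x (Suc ?n)" using st by (simp add: algebra_simps abs_le_iff)
      finally show ?thesis .
    qed
    have sumeq: "sum eps {N..<N + Suc j} = sum eps {N..<N+j} + eps ?n" by simp
    have "0 < x (Suc ?n)" using lo Suc.IH by (smt (verit) exp_gt_zero mult_pos_pos)
    moreover have "x (Suc ?n) \<le> x N * exp (sum eps {N..<N + Suc j})"
    proof -
      have "x (Suc ?n) \<le> exp (eps ?n) * (x N * exp (sum eps {N..<N+j}))"
        using up Suc.IH by (smt (verit) exp_gt_zero mult_left_mono)
      thus ?thesis unfolding sumeq by (simp add: exp_add algebra_simps)
    qed
    moreover have "x N * exp (-2 * sum eps {N..<N + Suc j}) \<le> x (Suc ?n)"
    proof -
      have "exp (-2 * eps ?n) * (x N * exp (-2 * sum eps {N..<N+j})) \<le> x (Suc ?n)"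
        using lo Suc.IH by (smt (verit) exp_gt_zero mult_left_mono)
      thus ?thesis unfolding sumeq by (simp add: exp_add[symmetric] algebra_simps)
    qed
    ultimately show ?case by simp
  qed
  have sle: "sum eps {N..<m} \<le> S" for m
    unfolding S_def by (rule sum_le_suminf[OF sm]) (auto simp: eps0)
  have S0: "0 \<le> S" unfolding S_def by (rule suminf_nonneg[OF sm eps0])
  have bnds: "0 < x n \<and> x n \<le> B \<and> x N * exp (-2 * S) \<le> x n" if "n \<ge> N" for n
  proof -
    obtain j where n: "n = N + j" using \<open>n \<ge> N\<close> le_Suc_ex by blast
    have "exp (sum eps {N..<n}) \<le> exp S" using sle by simp
    moreover have "exp (-2 * S) \<le> exp (-2 * sum eps {N..<n})" using sle by simp
    ultimately show ?thesis using ind[of j] pos unfolding n B_def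
      by (smt (verit) mult_left_mono)
  qed
  define t where "t n = (\<Sum>k. eps (k + n))" for n
  have t0: "t \<longlonglongrightarrow> 0" unfolding t_def by (rule suminf_exist_split2[OF sm])
  have cauchy: "\<bar>x m - x n\<bar> \<le> B * t n" if "N \<le> n" "n \<le> m" for n m
  proof -
    have "\<bar>x (n + j) - x n\<bar> \<le> B * sum eps {n..<n+j}" for j
    proof (induction j)
      case 0 then show ?case by simp
    next
      case (Suc j)
      have "\<bar>x (Suc (n + j)) - x (n + j)\<bar> \<le> eps (n+j) * x (n+j)"
        by (rule step) (use that in simp)
      also have "\<dots> \<le> eps (n+j) * B" using bnds[of "n+j"] that eps0 by (intro mult_left_mono) auto
      finally have "\<bar>x (Suc (n + j)) - x (n + j)\<bar> \<le> eps (n+j) * B" .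
      thus ?case using Suc.IH by (simp add: algebra_simps)
    qed
    moreover have "sum eps {n..<n+(m-n)} \<le> t n"
    proof -
      have "sum eps {n..<n+(m-n)} = (\<Sum>k<m-n. eps (k + n))"
        by (rule sum_shift_aux)
      also have "\<dots> \<le> t n" unfolding t_def
        by (rule sum_le_suminf[OF summable_ignore_initial_segment[OF sm]]) (auto simp: eps0)
      finally show ?thesis .
    qed
    moreover have "0 \<le> B" using bnds[of N] by simp
    ultimately show ?thesis using that
      by (smt (verit) le_add_diff_inverse mult_left_mono)
  qed
  have "Cauchy x"
  proof (rule metric_CauchyI)
    fix e :: real assume "e > 0"
    have "0 \<le> B" using bnds[of N] by simp
    obtain M where M: "\<forall>n\<ge>M. \<bar>t n\<bar> < e / (2 * (B + 1))"
      using t0[unfolded LIMSEQ_iff] \<open>e > 0\<close> \<open>0 \<le> B\<close> by (metis real_norm_def diff_zero divide_pos_pos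
          add_nonneg_pos zero_less_one mult_pos_pos zero_less_numeral)
    show "\<exists>M. \<forall>m\<ge>M. \<forall>n\<ge>M. dist (x m) (x n) < e"
    proof (intro exI allI impI)
      fix m n assume "max M N \<le> m" "max M N \<le> n"
      have key: "\<bar>x a - x b\<bar> < e / 2" if "max M N \<le> b" "b \<le> a" for a b
      proof -
        have "\<bar>x a - x b\<bar> \<le> B * t b" using cauchy that by auto
        also have "\<dots> \<le> B * (e / (2 * (B + 1)))"
          using M that \<open>0 \<le> B\<close> by (intro mult_left_mono) auto
        also have "\<dots> < e / 2" using \<open>0 \<le> B\<close> \<open>e > 0\<close> by (simp add: field_simps)
        finally show ?thesis .
      qed
      show "dist (x m) (x n) < e"
        using key[of n m] key[of m n] \<open>max M N \<le> m\<close> \<open>max M N \<le> n\<close> \<open>e > 0\<close>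
        by (cases "n \<le> m") (auto simp: dist_real_def abs_minus_commute)
    qed
  qed
  then obtain L where L: "x \<longlonglongrightarrow> L" using Cauchy_convergent_iff convergent_def by blast
  have Llo: "x N * exp (-2 * S) \<le> L"
    by (rule LIMSEQ_le_const[OF L]) (use bnds in auto)
  have Ldist: "\<bar>L - x n\<bar> \<le> B * t n" if "N \<le> n" for n
  proof -
    have "(\<lambda>m. \<bar>x m - x n\<bar>) \<longlonglongrightarrow> \<bar>L - x n\<bar>" by (intro tendsto_intros L)
    thus ?thesis by (rule LIMSEQ_le_const2) (use cauchy that in auto)
  qed
  show ?thesis
    using L Llo Ldist bnds unfolding S_def B_def t_def by blast
qed



lemma powr_tele:
  fixes x q :: real
  assumes x: "0 \<le> x" and q: "0 < q" "q < 1"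
  shows "q * (1+x) powr (q-1) \<le> (1+x) powr q - x powr q"
    and "0 < x \<Longrightarrow> (1+x) powr q - x powr q \<le> q * x powr (q-1)"
proof -
  have mvt: "\<exists>z. y < z \<and> z < y + 1 \<and> (y+1) powr q - y powr q = q * z powr (q-1)" if "0 < y" for y :: real
  proof -
    have "\<exists>z. y < z \<and> z < y + 1 \<and> ((\<lambda>t. t powr q) (y+1) - (\<lambda>t. t powr q) y = ((y+1) - y) * (q * z powr (q-1)))"
      by (rule MVT2) (use that in \<open>auto intro!: has_real_derivative_powr\<close>)
    thus ?thesis by simp
  qed
  show "q * (1+x) powr (q-1) \<le> (1+x) powr q - x powr q"
  proof (cases "x = 0")
    case True thus ?thesis using q by simp
  next
    case False
    with x have x0: "0 < x" by simp
    then obtain z where z: "x < z" "z < x + 1" "(x+1) powr q - x powr q = q * z powr (q-1)" using mvt by blast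
    have "(x+1) powr (q-1) \<le> z powr (q-1)" using z x0 q by (intro powr_mono2') auto
    thus ?thesis using z q by (simp add: add.commute)
  qed
  assume x0: "0 < x"
  then obtain z where z: "x < z" "z < x + 1" "(x+1) powr q - x powr q = q * z powr (q-1)" using mvt by blast
  have "z powr (q-1) \<le> x powr (q-1)" using z x0 q by (intro powr_mono2') auto
  thus "(1+x) powr q - x powr q \<le> q * x powr (q-1)" using z q by (simp add: add.commute)
qed

context
  fixes c p :: real
  assumes c: "c > 0" and p0: "0 < p" and p1: "p < 1"
begin

definition HH where "HH n = (\<Sum>k\<le>n. 1 / gg c p k)"
definition DD where "DD n = (real n + 1) powr (1 - p)"

lemma DD_pos: "DD n > 0" by (simp add: DD_def)

lemma HH_bounds: "(real n + 1) powr (1-p) - 1 \<le> c * (1-p) * HH n \<and> c * (1-p) * HH n \<le> (real n + 1) powr (1-p)"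
proof -
  define q where "q = 1 - p"
  have q: "0 < q" "q < 1" using p0 p1 by (auto simp: q_def)
  define t where "t k = q * real (Suc k) powr (q - 1)" for k
  have trm: "c * q * (1 / gg c p k) = t k" for k
  proof -
    have "real (Suc k) powr (q - 1) = real (Suc k) powr (- p)" by (simp add: q_def)
    also have "\<dots> = inverse (real (Suc k) powr p)" by (rule powr_minus)
    finally have "real (Suc k) powr (q - 1) = inverse (real (Suc k) powr p)" .
    moreover have "gg c p k = c * real (Suc k) powr p" by (simp add: gg_def add.commute)
    ultimately show ?thesis using c by (simp add: t_def divide_inverse)
  qed
  have sumeq: "c * q * HH n = (\<Sum>k<Suc n. t k)"
    unfolding HH_def sum_distrib_left trm lessThan_Suc_atMost ..
  have l1: "t k \<le> real (Suc k) powr q - real k powr q" for k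
    using powr_tele(1)[of "real k" q] q by (simp add: t_def)
  have l2: "real (Suc (Suc k)) powr q - real (Suc k) powr q \<le> t k" for k
    using powr_tele(2)[of "real (Suc k)" q] q by (simp add: t_def)
  have up: "(\<Sum>k<Suc n. t k) \<le> real (Suc n) powr q"
  proof -
    have "(\<Sum>k<Suc n. t k) \<le> (\<Sum>k<Suc n. real (Suc k) powr q - real k powr q)"
      by (intro sum_mono l1)
    also have "\<dots> = real (Suc n) powr q - real 0 powr q"
      by (rule sum_lessThan_telescope[where f = "\<lambda>k. real k powr q"])
    finally show ?thesis by simp
  qed
  have lo: "real (Suc (Suc n)) powr q - 1 \<le> (\<Sum>k<Suc n. t k)"
  proof -
    have "(\<Sum>k<Suc n. real (Suc (Suc k)) powr q - real (Suc k) powr q) \<le> (\<Sum>k<Suc n. t k)"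
      by (intro sum_mono l2)
    moreover have "(\<Sum>k<Suc n. real (Suc (Suc k)) powr q - real (Suc k) powr q) = real (Suc (Suc n)) powr q - real (Suc 0) powr q"
      by (rule sum_lessThan_telescope[where f = "\<lambda>k. real (Suc k) powr q"])
    ultimately show ?thesis by simp
  qed
  have "real (Suc n) powr q \<le> real (Suc (Suc n)) powr q" using q by (intro powr_mono2) auto
  moreover have "real (Suc n) = real n + 1" by simp
  ultimately show ?thesis using up lo sumeq unfolding q_def by (smt (verit))
qed

lemma DD_inf: "(\<lambda>n. 1 / DD n) \<longlonglongrightarrow> 0"
proof -
  have q: "0 < 1 - p" using p1 by simp
  have "(\<lambda>n. real n powr (-(1-p))) \<longlonglongrightarrow> 0"
    by (rule tendsto_neg_powr[OF _ filterlim_real_sequentially]) (use q in simp)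
  hence "(\<lambda>n. real (Suc n) powr (-(1-p))) \<longlonglongrightarrow> 0" by (rule LIMSEQ_Suc)
  moreover have "real (Suc n) powr (-(1-p)) = 1 / DD n" for n
  proof -
    have "real (Suc n) powr (-(1-p)) = inverse (real (Suc n) powr (1-p))" by (rule powr_minus)
    also have "real (Suc n) = real n + 1" by simp
    finally show ?thesis by (simp add: DD_def divide_inverse add.commute)
  qed
  ultimately show ?thesis by simp
qed

lemma HD_lim: "(\<lambda>n. HH n / DD n) \<longlonglongrightarrow> 1 / (c * (1 - p))"
proof -
  define K where "K = c * (1 - p)"
  have K: "K > 0" using c p1 by (simp add: K_def)
  have lo: "(1 - 1 / DD n) / K \<le> HH n / DD n" for n
  proof -
    have "DD n - 1 \<le> K * HH n" using HH_bounds[of n] unfolding DD_def K_def by linarith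
    hence "(DD n - 1) / (K * DD n) \<le> (K * HH n) / (K * DD n)"
      using K DD_pos[of n] by (intro divide_right_mono) auto
    moreover have "(1 - 1 / DD n) / K = (DD n - 1) / (K * DD n)" using K DD_pos[of n] by (simp add: field_simps)
    moreover have "(K * HH n) / (K * DD n) = HH n / DD n" using K by simp
    ultimately show ?thesis by simp
  qed
  have up: "HH n / DD n \<le> 1 / K" for n
  proof -
    have "K * HH n \<le> DD n" using HH_bounds[of n] unfolding DD_def K_def by linarith
    hence "(K * HH n) / (K * DD n) \<le> DD n / (K * DD n)"
      using K DD_pos[of n] by (intro divide_right_mono) auto
    thus ?thesis using K DD_pos[of n] by simp
  qed
  have lim1: "(\<lambda>n. (1 - 1 / DD n) / K) \<longlonglongrightarrow> (1 - 0) / K"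
    by (intro tendsto_divide tendsto_diff tendsto_const DD_inf) (use K in simp)
  have "(\<lambda>n. HH n / DD n) \<longlonglongrightarrow> 1 / K"
  proof (rule tendsto_sandwich[OF _ _ _ tendsto_const])
    show "\<forall>\<^sub>F n in sequentially. (1 - 1 / DD n) / K \<le> HH n / DD n" using lo by (simp add: always_eventually)
    show "\<forall>\<^sub>F n in sequentially. HH n / DD n \<le> 1 / K" using up by (simp add: always_eventually)
    show "(\<lambda>n. (1 - 1 / DD n) / K) \<longlonglongrightarrow> 1 / K" using lim1 by simp
  qed
  thus ?thesis by (simp add: K_def)
qed

lemma HD_bound: "HH n \<le> DD n / (c * (1 - p))"
proof -
  have "c * (1-p) * HH n \<le> DD n" using HH_bounds[of n] unfolding DD_def by linarith
  hence "(c * (1-p) * HH n) / (c * (1-p)) \<le> DD n / (c * (1 - p))"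
    using c p1 by (intro divide_right_mono) auto
  thus ?thesis using c p1 by simp
qed

lemma cesaro:
  assumes t0: "tau \<longlonglongrightarrow> 0" and tpos: "\<And>k. 0 \<le> tau k"
  shows "(\<lambda>n. (\<Sum>k\<le>n. tau k / gg c p k) / DD n) \<longlonglongrightarrow> 0"
proof (rule LIMSEQ_I)
  fix e :: real assume e: "e > 0"
  define K where "K = 1 / (c * (1 - p))"
  have K: "K > 0" using c p1 by (simp add: K_def)
  have "0 < e / (2 * K)" using e K by simp
  from LIMSEQ_D[OF t0 this] obtain M where M0: "\<forall>k\<ge>M. norm (tau k - 0) < e / (2 * K)" by blast
  have M: "\<And>k. k \<ge> M \<Longrightarrow> tau k < e / (2 * K)" using M0 by auto
  define C where "C = (\<Sum>k<M. tau k / gg c p k)"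
  have C0: "0 \<le> C" unfolding C_def using tpos gg_pos[OF c p0 p1] by (intro sum_nonneg) (simp add: less_imp_le)
  have "0 < e / (2 * (C + 1))" using e C0 by simp
  from LIMSEQ_D[OF DD_inf this] obtain N where N0: "\<forall>n\<ge>N. norm (1 / DD n - 0) < e / (2 * (C + 1))" by blast
  have N: "\<And>n. n \<ge> N \<Longrightarrow> 1 / DD n < e / (2 * (C + 1))" using N0 DD_pos by (simp add: abs_of_pos)
  show "\<exists>no. \<forall>n\<ge>no. norm ((\<Sum>k\<le>n. tau k / gg c p k) / DD n - 0) < e"
  proof (intro exI allI impI)
    fix n assume n: "max M N \<le> n"
    have bnd: "tau k / gg c p k \<le> (if k < M then tau k / gg c p k else 0) + (e / (2*K)) * (1 / gg c p k)" for k
    proof (cases "k < M")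
      case True
      have "0 \<le> (e / (2*K)) * (1 / gg c p k)" using e K gg_pos[OF c p0 p1, of k]
        by (intro mult_nonneg_nonneg divide_nonneg_nonneg) auto
      thus ?thesis using True by simp
    next
      case False
      hence "tau k \<le> e / (2*K)" using M by (simp add: less_imp_le)
      hence "tau k / gg c p k \<le> (e / (2*K)) / gg c p k"
        using gg_pos[OF c p0 p1, of k] by (intro divide_right_mono) auto
      thus ?thesis using False by simp
    qed
    have "(\<Sum>k\<le>n. tau k / gg c p k) \<le> (\<Sum>k\<le>n. (if k < M then tau k / gg c p k else 0)) + (e / (2*K)) * HH n"
      unfolding HH_def sum_distrib_left sum.distrib[symmetric] by (intro sum_mono bnd)
    also have "(\<Sum>k\<le>n. (if k < M then tau k / gg c p k else 0)) = C"
    proof -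
      have "(\<Sum>k\<le>n. (if k < M then tau k / gg c p k else 0)) = (\<Sum>k\<in>{..n} \<inter> {k. k < M}. tau k / gg c p k)"
        by (simp add: sum.inter_restrict)
      also have "{..n} \<inter> {k. k < M} = {..<M}" using n by auto
      finally show ?thesis by (simp add: C_def)
    qed
    also have "HH n \<le> K * DD n" using HD_bound[of n] unfolding K_def by simp
    hence "(e / (2*K)) * HH n \<le> (e / (2*K)) * (K * DD n)"
      using e K by (intro mult_left_mono) auto
    also have "(e / (2*K)) * (K * DD n) = e / 2 * DD n" using K by simp
    finally have s: "(\<Sum>k\<le>n. tau k / gg c p k) \<le> C + e / 2 * DD n" by simp
    have s0: "0 \<le> (\<Sum>k\<le>n. tau k / gg c p k)" using tpos gg_pos[OF c p0 p1] by (intro sum_nonneg) (simp add: less_imp_le)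
    have "(\<Sum>k\<le>n. tau k / gg c p k) / DD n \<le> (C + e / 2 * DD n) / DD n"
      using s DD_pos[of n] by (intro divide_right_mono) auto
    also have "(C + e / 2 * DD n) / DD n = C / DD n + e / 2"
      using DD_pos[of n] by (simp add: add_divide_distrib)
    also have "C / DD n = C * (1 / DD n)" by simp
    also have "C * (1 / DD n) \<le> C * (e / (2 * (C + 1)))"
      using N[of n] n C0 by (intro mult_left_mono) auto
    also have "C * (e / (2 * (C + 1))) = (e / 2) * (C / (C + 1))" by simp
    also have "(e / 2) * (C / (C + 1)) < (e / 2) * 1"
      using C0 e by (intro mult_strict_left_mono) auto
    finally have "(\<Sum>k\<le>n. tau k / gg c p k) / DD n < e" by linarith
    moreover have "0 \<le> (\<Sum>k\<le>n. tau k / gg c p k) / DD n" using s0 DD_pos[of n] by simp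
    ultimately show "norm ((\<Sum>k\<le>n. tau k / gg c p k) / DD n - 0) < e" by simp
  qed
qed

end


lemma opoly_pair_Suc': "opoly_pair g w (Suc n) = (snd (opoly_pair g w n),
   (w * snd (opoly_pair g w n) - g n * fst (opoly_pair g w n)) / g (Suc n))"
  by (simp add: Let_def split_def)

lemma cont_pair: "continuous_on UNIV (\<lambda>w. opoly_pair g w n)"
proof (induction n)
  case 0 show ?case by (simp only: opoly_pair.simps divide_inverse) (intro continuous_intros)
next
  case (Suc n)
  show ?case unfolding opoly_pair_Suc' divide_inverse
    by (intro continuous_intros Suc)
qed

lemma cont_opoly: "continuous_on UNIV (\<lambda>w. opoly g n w)"
  unfolding opoly_def by (intro continuous_intros cont_pair)

lemma cont_bound: assumes "continuous_on S f" "compact S" shows "\<exists>B. \<forall>x\<in>S. (f x :: real) \<le> B"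
proof -
  have "bounded (f ` S)" by (rule compact_imp_bounded[OF compact_continuous_image[OF assms]])
  then obtain a where "\<forall>y\<in>f ` S. \<bar>y\<bar> \<le> a" unfolding bounded_real by blast
  thus ?thesis by (metis abs_le_D1 imageI)
qed

lemma unif_bound:
  assumes b: "b \<longlonglongrightarrow> 0" and ev: "\<forall>\<^sub>F n in sequentially. \<forall>x\<in>S. \<bar>f n x - l x\<bar> \<le> (b n :: real)"
  shows "uniform_limit S f l sequentially"
proof (rule uniform_limitI)
  fix e :: real assume e: "e > 0"
  have "\<forall>\<^sub>F n in sequentially. b n < e" using order_tendstoD(2)[OF b e] .
  with ev show "\<forall>\<^sub>F n in sequentially. \<forall>x\<in>S. dist (f n x) (l x) < e"
    by eventually_elim (auto simp: dist_real_def intro: le_less_trans)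
qed

lemma summable_inv_sq: "summable (\<lambda>n. 1 / (real n + 1)^2)"
proof -
  have "summable (\<lambda>n. inverse (real n ^ 2))" by (rule inverse_power_summable) simp
  hence "summable (\<lambda>n. inverse (real (Suc n) ^ 2))" by (subst summable_Suc_iff)
  thus ?thesis by (simp add: divide_inverse add.commute)
qed

context
  fixes c p :: real
  assumes c: "c > 0" and p0: "0 < p" and p1: "p < 1"
begin

lemma jac_gg: "jac (gg c p)"
  by unfold_locales (use gg_pos[OF c p0 p1] gg_mono[OF c p0 p1] gg_e[OF c p0 p1] gg_e2[OF c p0 p1] gg_r2[OF c p0 p1] in auto)

lemma gg_ge0: "gg c p 0 \<le> gg c p n"
proof -
  have "1 \<le> (real n + 1) powr p" by (rule ge_one_powr_ge_zero) (use p0 in auto)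
  thus ?thesis using c by (simp add: gg_def)
qed

lemma inv_gg_0: "(\<lambda>n. 1 / gg c p n) \<longlonglongrightarrow> 0"
proof (rule LIMSEQ_I)
  fix r :: real assume r: "r > 0"
  obtain N where N: "\<forall>n\<ge>N. 2 / r \<le> gg c p n" using gg_ge[OF c p0 p1] by blast
  show "\<exists>no. \<forall>n\<ge>no. norm (1 / gg c p n - 0) < r"
  proof (intro exI allI impI)
    fix n assume "N \<le> n"
    hence h: "2 / r \<le> gg c p n" using N by simp
    have gp: "gg c p n > 0" using gg_pos[OF c p0 p1] by simp
    have "1 / gg c p n \<le> 1 / (2 / r)" using h r gp by (intro divide_left_mono) auto
    also have "\<dots> < r" using r by simp
    finally have "1 / gg c p n < r" .
    thus "norm (1 / gg c p n - 0) < r" using gp by (simp add: abs_of_pos)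
  qed
qed

end


lemma eq_alg: "D > 0 \<Longrightarrow> K \<noteq> 0 \<Longrightarrow> ((F*H + S + 1 - Pn)/2)/D - F/(2*K) = (F*(H/D - 1/K) + S/D + (1-Pn)/D)/2"
  for D K F H S Pn :: real
  by (simp add: field_simps)

lemma abs_half: "\<bar>X / 2\<bar> = \<bar>X\<bar> / (2::real)" by simp

lemma abs3: "\<bar>a + b + c\<bar> \<le> \<bar>a\<bar> + \<bar>b\<bar> + \<bar>c\<bar>" for a b c :: real
  using abs_triangle_ineq[of "a+b" c] abs_triangle_ineq[of a b] by linarith

context
  fixes c p :: real
  assumes c: "c > 0" and p0: "0 < p" and p1: "p < 1"
begin

lemma main_R:
  assumes R: "R > 0"
  shows "\<exists>L'. (\<forall>w\<in>cball 0 R. 0 < L' w) \<and>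
    uniform_limit (cball 0 R) (\<lambda>n w. (\<Sum>k\<le>n. (opoly (gg c p) k w)\<^sup>2) / (real n + 1) powr (1 - p)) L' sequentially"
proof -
  interpret J: jac "gg c p" by (rule jac_gg[OF c p0 p1])
  have gp: "\<And>n. gg c p n > 0" by (rule gg_pos[OF c p0 p1])
  define eps where "eps n = 9 / (real n + 1)^2 + 2 * R / ((real n + 1) * gg c p n)" for n
  have eps0: "\<And>n. 0 \<le> eps n" unfolding eps_def using R gp by (simp add: less_imp_le)
  have s1: "summable (\<lambda>n. 9 * (1 / (real n + 1)^2))" by (rule summable_mult[OF summable_inv_sq])
  have s2: "summable (\<lambda>n. 2 * R * (1 / ((real n + 1) * gg c p n)))" by (rule summable_mult[OF gg_sum[OF c p0 p1]])
  have sm: "summable eps" using summable_add[OF s1 s2] unfolding eps_def by simp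
  obtain N1 where N1: "\<forall>n\<ge>N1. norm (eps n - 0) < 1/2"
    using LIMSEQ_D[OF summable_LIMSEQ_zero[OF sm], of "1/2"] by auto
  obtain N2 where N2: "\<forall>n\<ge>N2. R \<le> gg c p n" using gg_ge[OF c p0 p1] by blast
  define N where "N = max N1 N2"
  have epsh: "\<And>n. N \<le> n \<Longrightarrow> eps n \<le> 1/2" using N1 eps0 unfolding N_def by fastforce
  have wg: "\<And>w n. w \<in> cball 0 R \<Longrightarrow> N \<le> n \<Longrightarrow> \<bar>w\<bar> \<le> R \<and> \<bar>w\<bar> \<le> gg c p n \<and> R \<le> gg c p n"
    using N2 unfolding N_def by (auto simp: dist_real_def)
  define x where "x w n = J.E n w + J.E (Suc n) w" for w n
  define S where "S = suminf eps"
  define t where "t n = (\<Sum>k. eps (k + n))" for n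
  have t0: "t \<longlonglongrightarrow> 0" unfolding t_def by (rule suminf_exist_split2[OF sm])
  have contx: "continuous_on UNIV (\<lambda>w. x w N)"
    unfolding x_def J.E_def by (intro continuous_intros cont_opoly)
  obtain B where B: "\<forall>w\<in>cball 0 R. x w N \<le> B"
    using cont_bound[OF continuous_on_subset[OF contx] compact_cball] by blast
  define B' where "B' = max B 0 * exp S"
  have B'0: "0 \<le> B'" unfolding B'_def by simp
  have conv: "\<exists>L. (\<lambda>n. x w n) \<longlonglongrightarrow> L \<and> 0 < L \<and> (\<forall>n\<ge>N. 0 < x w n \<and> x w n \<le> B' \<and> \<bar>L - x w n\<bar> \<le> B' * t n)"
    if w: "w \<in> cball 0 R" for w
  proof -
    have step: "\<bar>x w (Suc n) - x w n\<bar> \<le> eps n * x w n" if n: "N \<le> n" for n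
    proof -
      have h: "\<bar>w\<bar> \<le> R" "R \<le> gg c p n" using wg[OF w n] by auto
      have "\<bar>x w (Suc n) - x w n\<bar> = \<bar>J.E (Suc (Suc n)) w - J.E n w\<bar>" by (simp add: x_def)
      also have "\<dots> \<le> eps n * J.E (Suc n) w" unfolding eps_def by (rule J.step2[OF h])
      also have "\<dots> \<le> eps n * x w n"
        using J.E_pos[of w n] wg[OF w n] eps0[of n] by (intro mult_left_mono) (auto simp: x_def)
      finally show ?thesis .
    qed
    have pos: "x w N > 0" using J.E_pos[of w N] J.E_pos[of w "Suc N"] wg[OF w, of N] wg[OF w, of "Suc N"]
      by (simp add: x_def)
    obtain L where L: "(\<lambda>n. x w n) \<longlonglongrightarrow> L" "x w N * exp (-2 * suminf eps) \<le> L"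
      "\<forall>n\<ge>N. 0 < x w n \<and> x w n \<le> x w N * exp (suminf eps) \<and> \<bar>L - x w n\<bar> \<le> x w N * exp (suminf eps) * t n"
      using mult_conv[of eps N "x w", OF eps0 epsh sm step pos] unfolding t_def by blast
    have xB: "x w N * exp (suminf eps) \<le> B'"
    proof -
      have "x w N \<le> max B 0" using B w by force
      thus ?thesis unfolding B'_def S_def by (intro mult_right_mono) auto
    qed
    have tn: "0 \<le> t n" for n unfolding t_def
      by (rule suminf_nonneg[OF summable_ignore_initial_segment[OF sm]]) (simp add: eps0)
    show ?thesis
    proof (intro exI conjI allI impI)
      show "(\<lambda>n. x w n) \<longlonglongrightarrow> L" by (rule L(1))
      show "0 < L" using L(2) pos by (smt (verit) exp_gt_zero mult_pos_pos)
      fix n assume n: "N \<le> n"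
      show "0 < x w n" using L(3) n by blast
      show "x w n \<le> B'" using L(3) n xB by fastforce
      have "x w N * exp (suminf eps) * t n \<le> B' * t n" using xB tn by (intro mult_right_mono) auto
      thus "\<bar>L - x w n\<bar> \<le> B' * t n" using L(3) n by fastforce
    qed
  qed
  define L0 where "L0 w = lim (\<lambda>n. x w n)" for w
  have L0: "(\<lambda>n. x w n) \<longlonglongrightarrow> L0 w \<and> 0 < L0 w \<and> (\<forall>n\<ge>N. 0 < x w n \<and> x w n \<le> B' \<and> \<bar>L0 w - x w n\<bar> \<le> B' * t n)"
    if w: "w \<in> cball 0 R" for w
  proof -
    obtain L where L: "(\<lambda>n. x w n) \<longlonglongrightarrow> L \<and> 0 < L \<and> (\<forall>n\<ge>N. 0 < x w n \<and> x w n \<le> B' \<and> \<bar>L - x w n\<bar> \<le> B' * t n)"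
      using conv[OF w] by blast
    hence "L0 w = L" unfolding L0_def by (intro limI) simp
    thus ?thesis using L by simp
  qed
  define F where "F w = L0 w / 2" for w
  have Ebnd: "0 < J.E n w \<and> J.E n w \<le> B'" if w: "w \<in> cball 0 R" and n: "N \<le> n" for w n
  proof -
    have "0 < J.E n w" using J.E_pos wg[OF w n] by blast
    moreover have "0 < J.E (Suc n) w" using J.E_pos wg[OF w, of "Suc n"] n by simp
    ultimately show ?thesis using L0[OF w] n unfolding x_def by force
  qed
  have Fpos: "0 < F w" if "w \<in> cball 0 R" for w using L0[OF that] by (simp add: F_def)
  have FB: "F w \<le> B'" if w: "w \<in> cball 0 R" for w
  proof -
    have "L0 w \<le> B'"
      by (rule LIMSEQ_le_const2[of "\<lambda>n. x w n"]) (use L0[OF w] in auto)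
    thus ?thesis using B'0 by (simp add: F_def)
  qed
  define eta where "eta n = B' * (t n + 7 / (real n + 1)) / 2" for n
  have Eclose: "\<bar>J.E n w - F w\<bar> \<le> eta n" if w: "w \<in> cball 0 R" and n: "N \<le> n" for w n
  proof -
    have wn: "\<bar>w\<bar> \<le> gg c p n" using wg[OF w n] by blast
    have d: "\<bar>J.E (Suc n) w - J.E n w\<bar> \<le> 7 * B' / (real n + 1)"
    proof -
      have "\<bar>J.E (Suc n) w - J.E n w\<bar> = J.e n * \<bar>J.X n w\<bar>"
        using J.E_step[of n w] J.e_nonneg[of n] by (simp add: abs_mult)
      also have "\<dots> \<le> (1 / (real n + 1)) * (7 * B')"
        using J.e_le[of n] J.e_nonneg[of n] J.X_bound[OF wn] Ebnd[OF w n] by (intro mult_mono) auto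
      finally show ?thesis by simp
    qed
    have "J.E n w - F w = (x w n - L0 w) / 2 - (J.E (Suc n) w - J.E n w) / 2"
      by (simp add: x_def F_def field_simps)
    hence "\<bar>J.E n w - F w\<bar> \<le> \<bar>x w n - L0 w\<bar> / 2 + \<bar>J.E (Suc n) w - J.E n w\<bar> / 2"
      using abs_triangle_ineq4[of "(x w n - L0 w)/2" "(J.E (Suc n) w - J.E n w)/2"] by simp
    also have "\<dots> \<le> B' * t n / 2 + 7 * B' / (real n + 1) / 2"
    proof -
      have "\<bar>x w n - L0 w\<bar> \<le> B' * t n" using L0[OF w] n by (simp add: abs_minus_commute)
      thus ?thesis using d by (intro add_mono divide_right_mono) auto
    qed
    also have "\<dots> = eta n" by (simp add: eta_def field_simps)
    finally show ?thesis .
  qed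
  define tau where "tau n = eta n + R * B' / gg c p n" for n
  have tau0: "tau \<longlonglongrightarrow> 0"
  proof -
    have "(\<lambda>n. 1 / (real n + 1)) \<longlonglongrightarrow> 0"
      using LIMSEQ_Suc[OF lim_const_over_n[of 1]] by (simp add: add.commute)
    hence "eta \<longlonglongrightarrow> B' * (0 + 7 * 0) / 2" unfolding eta_def
      by (intro tendsto_intros t0) (simp_all add: divide_inverse)
    moreover have "(\<lambda>n. R * B' / gg c p n) \<longlonglongrightarrow> R * B' * 0"
      using tendsto_mult_left[OF inv_gg_0[OF c p0 p1], of "R * B'"] by simp
    ultimately show ?thesis unfolding tau_def using tendsto_add by fastforce
  qed
  have taunn: "0 \<le> tau n" for n
  proof -
    have "0 \<le> t n" unfolding t_def
      by (rule suminf_nonneg[OF summable_ignore_initial_segment[OF sm]]) (simp add: eps0)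
    thus ?thesis unfolding tau_def eta_def using B'0 R gp[of n] by simp
  qed
  define a where "a w k = (opoly (gg c p) k w)^2 + (opoly (gg c p) (Suc k) w)^2" for w k
  have rho: "\<bar>gg c p k * a w k - F w\<bar> \<le> tau k" if w: "w \<in> cball 0 R" and k: "N \<le> k" for w k
  proof -
    have wk: "\<bar>w\<bar> \<le> gg c p k" "\<bar>w\<bar> \<le> R" using wg[OF w k] by auto
    have "\<bar>gg c p k * a w k - J.E k w\<bar> \<le> \<bar>w\<bar> * (a w k / 2)" unfolding a_def by (rule J.E_close)
    also have "\<dots> \<le> R * ((2 * B' / gg c p k) / 2)"
    proof (intro mult_mono divide_right_mono)
      have "a w k \<le> 2 * J.E k w / gg c p k" unfolding a_def by (rule J.sq_le_E[OF wk(1)])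
      also have "\<dots> \<le> 2 * B' / gg c p k" using Ebnd[OF w k] gp[of k] by (intro divide_right_mono) auto
      finally show "a w k \<le> 2 * B' / gg c p k" .
    qed (use wk R B'0 gp[of k] in \<open>auto simp: a_def\<close>)
    also have "\<dots> = R * B' / gg c p k" by simp
    finally have "\<bar>gg c p k * a w k - J.E k w\<bar> \<le> R * B' / gg c p k" .
    thus ?thesis using Eclose[OF w k] unfolding tau_def by linarith
  qed
  have conta: "continuous_on UNIV (\<lambda>w. \<Sum>k<N. a w k)"
    unfolding a_def by (intro continuous_intros cont_opoly)
  obtain C1 where C1: "\<forall>w\<in>cball 0 R. (\<Sum>k<N. a w k) \<le> C1"
    using cont_bound[OF continuous_on_subset[OF conta] compact_cball] by blast
  define C2 where "C2 = C1 + B' * HH c p N"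
  define q where "q = 1 - p"
  have q: "0 < q" using p1 by (simp add: q_def)
  define Lp where "Lp w = F w / (2 * c * q)" for w
  define A where "A n w = (\<Sum>k\<le>n. (opoly (gg c p) k w)\<^sup>2)" for n w
  define b where "b n = (B' * \<bar>HH c p n / DD p n - 1 / (c * q)\<bar> + (C2 + (\<Sum>k\<le>n. tau k / gg c p k)) / DD p n
      + (1 + 2 * B' / gg c p 0) / DD p n) / 2" for n
  have b0: "b \<longlonglongrightarrow> 0"
  proof -
    have h1: "(\<lambda>n. \<bar>HH c p n / DD p n - 1 / (c * q)\<bar>) \<longlonglongrightarrow> \<bar>1 / (c * q) - 1 / (c * q)\<bar>"
      unfolding q_def by (intro tendsto_intros HD_lim[OF c p0 p1])
    have h2: "(\<lambda>n. (C2 + (\<Sum>k\<le>n. tau k / gg c p k)) / DD p n) \<longlonglongrightarrow> C2 * 0 + 0"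
    proof -
      have "(\<lambda>n. C2 * (1 / DD p n) + (\<Sum>k\<le>n. tau k / gg c p k) / DD p n) \<longlonglongrightarrow> C2 * 0 + 0"
        by (intro tendsto_intros DD_inf[OF c p0 p1] cesaro[OF c p0 p1 tau0 taunn])
      thus ?thesis by (simp add: add_divide_distrib)
    qed
    have h3: "(\<lambda>n. (1 + 2 * B' / gg c p 0) * (1 / DD p n)) \<longlonglongrightarrow> (1 + 2 * B' / gg c p 0) * 0"
      by (intro tendsto_intros DD_inf[OF c p0 p1])
    have h1': "(\<lambda>n. \<bar>HH c p n / DD p n - 1 / (c * q)\<bar>) \<longlonglongrightarrow> 0" using h1 by simp
    have h2': "(\<lambda>n. (C2 + (\<Sum>k\<le>n. tau k / gg c p k)) / DD p n) \<longlonglongrightarrow> 0" using h2 by simp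
    have h3': "(\<lambda>n. (1 + 2 * B' / gg c p 0) / DD p n) \<longlonglongrightarrow> 0" using h3 by simp
    have "(\<lambda>n. (B' * \<bar>HH c p n / DD p n - 1 / (c * q)\<bar> + (C2 + (\<Sum>k\<le>n. tau k / gg c p k)) / DD p n
      + (1 + 2 * B' / gg c p 0) / DD p n) / 2) \<longlonglongrightarrow> 0"
      using tendsto_mult_left[OF h1', of B'] by (intro tendsto_divide_zero tendsto_add_zero h2' h3') simp_all
    thus ?thesis unfolding b_def by simp
  qed
  have sum_a: "(\<Sum>k\<le>n. a w k) = 2 * A n w + (opoly (gg c p) (Suc n) w)^2 - 1" for n w
    by (induction n) (simp_all add: a_def A_def opoly_0)
  have sum_rho: "(\<Sum>k\<le>n. a w k) = F w * HH c p n + (\<Sum>k\<le>n. (gg c p k * a w k - F w) / gg c p k)" for n w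
  proof -
    have "a w k = F w * (1 / gg c p k) + (gg c p k * a w k - F w) / gg c p k" for k
      using gp[of k] by (simp add: field_simps)
    hence "(\<Sum>k\<le>n. a w k) = (\<Sum>k\<le>n. F w * (1 / gg c p k) + (gg c p k * a w k - F w) / gg c p k)"
      by (intro sum.cong) auto
    also have "\<dots> = F w * HH c p n + (\<Sum>k\<le>n. (gg c p k * a w k - F w) / gg c p k)"
    proof -
      have "HH c p n = (\<Sum>k\<le>n. 1 / gg c p k)" by (simp add: HH_def[OF c p0 p1])
      thus ?thesis by (simp add: sum.distrib sum_distrib_left)
    qed
    finally show ?thesis .
  qed
  have bound: "\<bar>A n w / DD p n - Lp w\<bar> \<le> b n" if w: "w \<in> cball 0 R" and n: "N \<le> n" for w n
  proof -
    define Sr where "Sr = (\<Sum>k\<le>n. (gg c p k * a w k - F w) / gg c p k)"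
    define Pn where "Pn = (opoly (gg c p) (Suc n) w)^2"
    have D0: "0 < DD p n" by (rule DD_pos[OF c p0 p1])
    have cq: "0 < c * q" using c q by simp
    have "2 * A n w = F w * HH c p n + Sr + 1 - Pn"
      using sum_a[where n=n and w=w] sum_rho[where n=n and w=w] unfolding Sr_def Pn_def by linarith
    hence Aeq: "A n w = (F w * HH c p n + Sr + 1 - Pn) / 2" by simp
    have eq: "A n w / DD p n - Lp w = (F w * (HH c p n / DD p n - 1 / (c * q)) + Sr / DD p n + (1 - Pn) / DD p n) / 2"
      unfolding Aeq Lp_def mult.assoc[of 2 c q] by (rule eq_alg[OF D0]) (use c q in simp)
    have t1: "\<bar>F w * (HH c p n / DD p n - 1 / (c * q))\<bar> \<le> B' * \<bar>HH c p n / DD p n - 1 / (c * q)\<bar>"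
      unfolding abs_mult using Fpos[OF w] FB[OF w] by (intro mult_right_mono) auto
    have t2: "\<bar>Sr\<bar> \<le> C2 + (\<Sum>k\<le>n. tau k / gg c p k)"
    proof -
      define psi where "psi k = (if k < N then \<bar>gg c p k * a w k - F w\<bar> / gg c p k else 0)" for k
      have "\<bar>Sr\<bar> \<le> (\<Sum>k\<le>n. \<bar>(gg c p k * a w k - F w) / gg c p k\<bar>)"
        unfolding Sr_def by (rule sum_abs)
      also have "\<dots> \<le> (\<Sum>k\<le>n. psi k + tau k / gg c p k)"
      proof (rule sum_mono)
        fix k assume "k \<in> {..n}"
        show "\<bar>(gg c p k * a w k - F w) / gg c p k\<bar> \<le> psi k + tau k / gg c p k"
        proof (cases "k < N")
          case True
          have "0 \<le> tau k / gg c p k" using taunn[of k] gp[of k] by simp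
          thus ?thesis using True gp[of k] by (simp add: psi_def)
        next
          case False
          hence "\<bar>gg c p k * a w k - F w\<bar> / gg c p k \<le> tau k / gg c p k"
            using rho[OF w, of k] gp[of k] by (intro divide_right_mono) auto
          thus ?thesis using False gp[of k] by (simp add: psi_def)
        qed
      qed
      also have "\<dots> = (\<Sum>k\<le>n. psi k) + (\<Sum>k\<le>n. tau k / gg c p k)" by (rule sum.distrib)
      also have "(\<Sum>k\<le>n. psi k) = (\<Sum>k<N. \<bar>gg c p k * a w k - F w\<bar> / gg c p k)"
      proof -
        have "(\<Sum>k\<le>n. psi k) = (\<Sum>k\<in>{..n} \<inter> {k. k < N}. \<bar>gg c p k * a w k - F w\<bar> / gg c p k)"
          unfolding psi_def by (simp add: sum.inter_restrict)
        also have "{..n} \<inter> {k. k < N} = {..<N}" using n by auto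
        finally show ?thesis .
      qed
      also have "(\<Sum>k<N. \<bar>gg c p k * a w k - F w\<bar> / gg c p k) \<le> (\<Sum>k<N. a w k + B' * (1 / gg c p k))"
      proof (rule sum_mono)
        fix k assume "k \<in> {..<N}"
        have a0: "0 \<le> a w k" by (simp add: a_def)
        have e1: "(gg c p k * a w k - F w) / gg c p k = a w k - F w / gg c p k"
          using gp[of k] by (simp add: field_simps)
        have "\<bar>gg c p k * a w k - F w\<bar> / gg c p k = \<bar>(gg c p k * a w k - F w) / gg c p k\<bar>"
          using gp[of k] by (simp add: abs_divide)
        hence "\<bar>gg c p k * a w k - F w\<bar> / gg c p k = \<bar>a w k - F w / gg c p k\<bar>" unfolding e1 .
        also have "\<dots> \<le> a w k + F w / gg c p k"
        proof -
          have f0: "0 \<le> F w / gg c p k" using Fpos[OF w] gp[of k] by simp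
          show ?thesis using abs_triangle_ineq4[of "a w k" "F w / gg c p k"] a0 f0 by simp
        qed
        also have "F w / gg c p k \<le> B' * (1 / gg c p k)" using FB[OF w] gp[of k] by (simp add: divide_right_mono)
        finally show "\<bar>gg c p k * a w k - F w\<bar> / gg c p k \<le> a w k + B' * (1 / gg c p k)" by simp
      qed
      also have "\<dots> = (\<Sum>k<N. a w k) + B' * (\<Sum>k<N. 1 / gg c p k)"
        by (simp add: sum.distrib sum_distrib_left)
      also have "\<dots> \<le> C2"
      proof -
        have "(\<Sum>k<N. 1 / gg c p k) \<le> HH c p N" unfolding HH_def[OF c p0 p1]
          by (rule sum_mono2) (use gp in \<open>auto simp: less_imp_le\<close>)
        hence "B' * (\<Sum>k<N. 1 / gg c p k) \<le> B' * HH c p N" using B'0 by (rule mult_left_mono)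
        thus ?thesis using C1 w unfolding C2_def by fastforce
      qed
      finally show ?thesis by simp
    qed
    have t3: "\<bar>1 - Pn\<bar> \<le> 1 + 2 * B' / gg c p 0"
    proof -
      have wn: "\<bar>w\<bar> \<le> gg c p n" using wg[OF w n] by blast
      have "Pn \<le> a w n" unfolding Pn_def a_def by simp
      also have "\<dots> \<le> 2 * J.E n w / gg c p n" unfolding a_def by (rule J.sq_le_E[OF wn])
      also have "\<dots> \<le> 2 * B' / gg c p n" using Ebnd[OF w n] gp[of n] by (intro divide_right_mono) auto
      also have "\<dots> \<le> 2 * B' / gg c p 0" using B'0 gp gg_ge0[OF c p0 p1, of n] by (intro divide_left_mono) auto
      finally have "Pn \<le> 2 * B' / gg c p 0" .
      moreover have "0 \<le> Pn" by (simp add: Pn_def)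
      ultimately show ?thesis by linarith
    qed
    have "\<bar>A n w / DD p n - Lp w\<bar> \<le> (\<bar>F w * (HH c p n / DD p n - 1 / (c * q))\<bar> + \<bar>Sr\<bar> / DD p n + \<bar>1 - Pn\<bar> / DD p n) / 2"
    proof -
      let ?T1 = "F w * (HH c p n / DD p n - 1 / (c * q))"
      have X: "\<bar>?T1 + Sr / DD p n + (1 - Pn) / DD p n\<bar> \<le> \<bar>?T1\<bar> + \<bar>Sr\<bar> / DD p n + \<bar>1 - Pn\<bar> / DD p n"
      proof -
        have e1: "\<bar>Sr / DD p n\<bar> = \<bar>Sr\<bar> / DD p n" using D0 by (simp add: abs_divide)
        have e2: "\<bar>(1 - Pn) / DD p n\<bar> = \<bar>1 - Pn\<bar> / DD p n" using D0 by (simp add: abs_divide)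
        show ?thesis using abs3[of ?T1 "Sr / DD p n" "(1 - Pn) / DD p n"] unfolding e1 e2 .
      qed
      have "\<bar>A n w / DD p n - Lp w\<bar> = \<bar>?T1 + Sr / DD p n + (1 - Pn) / DD p n\<bar> / 2"
        unfolding eq by (rule abs_half)
      also have "\<dots> \<le> (\<bar>?T1\<bar> + \<bar>Sr\<bar> / DD p n + \<bar>1 - Pn\<bar> / DD p n) / 2"
        using X by (rule divide_right_mono) simp
      finally show ?thesis .
    qed
    also have "\<dots> \<le> b n"
    proof -
      have a2: "\<bar>Sr\<bar> / DD p n \<le> (C2 + (\<Sum>k\<le>n. tau k / gg c p k)) / DD p n"
        using t2 D0 by (rule divide_right_mono[OF _ less_imp_le])
      have a3: "\<bar>1 - Pn\<bar> / DD p n \<le> (1 + 2 * B' / gg c p 0) / DD p n"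
        using t3 D0 by (rule divide_right_mono[OF _ less_imp_le])
      show ?thesis unfolding b_def
        by (rule divide_right_mono[OF add_mono[OF add_mono[OF t1 a2] a3]]) simp
    qed
    finally show ?thesis .
  qed
  show ?thesis
  proof (intro exI conjI ballI)
    fix w :: real assume "w \<in> cball 0 R" thus "0 < Lp w" using Fpos q c by (simp add: Lp_def)
  next
    show "uniform_limit (cball 0 R) (\<lambda>n w. (\<Sum>k\<le>n. (opoly (gg c p) k w)\<^sup>2) / (real n + 1) powr (1 - p)) Lp sequentially"
    proof (rule unif_bound[OF b0])
      show "\<forall>\<^sub>F n in sequentially. \<forall>w\<in>cball 0 R. \<bar>(\<Sum>k\<le>n. (opoly (gg c p) k w)\<^sup>2) / (real n + 1) powr (1 - p) - Lp w\<bar> \<le> b n"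
      proof -
        have "\<forall>n\<ge>N. \<forall>w\<in>cball 0 R. \<bar>(\<Sum>k\<le>n. (opoly (gg c p) k w)\<^sup>2) / (real n + 1) powr (1 - p) - Lp w\<bar> \<le> b n"
        proof (intro allI impI ballI)
          fix n :: nat and w :: real assume n: "N \<le> n" and w: "w \<in> cball 0 R"
          have "A n w / DD p n = (\<Sum>k\<le>n. (opoly (gg c p) k w)\<^sup>2) / (real n + 1) powr (1 - p)"
            by (simp add: A_def DD_def[OF c p0 p1])
          thus "\<bar>(\<Sum>k\<le>n. (opoly (gg c p) k w)\<^sup>2) / (real n + 1) powr (1 - p) - Lp w\<bar> \<le> b n"
            using bound[OF w n] by simp
        qed
        thus ?thesis unfolding eventually_sequentially by (intro exI)
      qed
    qed
  qed
qed

end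


theorem corollary4:
  fixes c p :: real
  assumes "c > 0" and "0 < p" and "p < 1"
  defines "g \<equiv> (\<lambda>n::nat. c * (real n + 1) powr p)"
  shows "\<exists>L :: real \<Rightarrow> real.
           (\<forall>w. 0 < L w \<and>
              (\<lambda>n. (\<Sum>k\<le>n. (opoly g k w)\<^sup>2) / (real n + 1) powr (1 - p)) \<longlonglongrightarrow> L w) \<and>
           (\<forall>K. compact K \<longrightarrow>
              uniform_limit K (\<lambda>n w. (\<Sum>k\<le>n. (opoly g k w)\<^sup>2) / (real n + 1) powr (1 - p))
                L sequentially)"
proof -
  have gg: "g = gg c p" unfolding g_def by (rule ext) (simp add: gg_def)
  define f where "f n w = (\<Sum>k\<le>n. (opoly g k w)\<^sup>2) / (real n + 1) powr (1 - p)" for n w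
  define L where "L w = lim (\<lambda>n. f n w)" for w
  have U: "(\<forall>w\<in>cball 0 R. 0 < L w) \<and> uniform_limit (cball 0 R) f L sequentially" if R: "R > 0" for R
  proof -
    obtain L' where L': "\<forall>w\<in>cball 0 R. 0 < L' w"
      "uniform_limit (cball 0 R) (\<lambda>n w. (\<Sum>k\<le>n. (opoly (gg c p) k w)\<^sup>2) / (real n + 1) powr (1 - p)) L' sequentially"
      using main_R[OF assms(1,2,3) R] by blast
    have UL: "uniform_limit (cball 0 R) f L' sequentially" using L'(2) unfolding f_def gg .
    have eq: "L w = L' w" if w: "w \<in> cball 0 R" for w
      unfolding L_def by (rule limI) (rule tendsto_uniform_limitI[OF UL w])
    show ?thesis
    proof
      show "\<forall>w\<in>cball 0 R. 0 < L w" using L'(1) eq by simp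
      show "uniform_limit (cball 0 R) f L sequentially"
        using UL by (subst uniform_limit_cong'[where h = L and i = L']) (simp_all add: eq)
    qed
  qed
  show ?thesis
  proof (intro exI conjI allI impI)
    fix w :: real
    have R: "\<bar>w\<bar> + 1 > 0" by simp
    have w: "w \<in> cball 0 (\<bar>w\<bar> + 1)" by (simp add: dist_real_def)
    show "0 < L w" using U[OF R] w by blast
    show "(\<lambda>n. (\<Sum>k\<le>n. (opoly g k w)\<^sup>2) / (real n + 1) powr (1 - p)) \<longlonglongrightarrow> L w"
      using tendsto_uniform_limitI[OF conjunct2[OF U[OF R]] w] unfolding f_def .
  next
    fix K :: "real set" assume K: "compact K"
    then obtain b where b: "b > 0" "\<forall>x\<in>K. norm x \<le> b" using compact_imp_bounded bounded_pos by metis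
    have sub: "K \<subseteq> cball 0 b" using b by (auto simp: dist_real_def)
    show "uniform_limit K (\<lambda>n w. (\<Sum>k\<le>n. (opoly g k w)\<^sup>2) / (real n + 1) powr (1 - p)) L sequentially"
      using uniform_limit_on_subset[OF conjunct2[OF U[OF b(1)]] sub] unfolding f_def .
  qed
qed


end
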